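(* Let $R=[x_1,x_2]\times[y_1,y_2]\subseteq\overline{\mathbb{R}}^2$ be an admissible rectangle and let $A$ be a real function defined on its four corners which is increasing in each variable on the corners, i.e. $A(x_1,y)\leqslant A(x_2,y)$ for $y\in\{y_1,y_2\}$ and $A(x,y_1)\leqslant A(x,y_2)$ for $x\in\{x_1,x_2\}$. Then the bilinear interpolation $A^{\mathrm{BL}}$ of $A$ on $R$ is nondecreasing in each variable on $R$. Moreover, for every subrectangle $R_1=[u_1,u_2]\times[v_1,v_2]\subseteq R$ (with $u_1<u_2$, $v_1<v_2$) we have, writing $V$ for the volume with respect to $A^{\mathrm{BL}}$: (a) $V(R_1)>0$ if and only if $V(R)>0$; (b) $V(R_1)<0$ if and only if $V(R)<0$; (c) $V(R_1)=0$ if and only if $V(R)=0$.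
   Context: $\overline{\mathbb{R}}=\mathbb{R}\cup\{-\infty,\infty\}$. An admissible rectangle is $[x_1,x_2]\times[y_1,y_2]$ with $x_1<x_2$, $y_1<y_2$ in $\overline{\mathbb{R}}$ such that in each coordinate at most one endpoint is infinite, and if $x_1=-\infty$ then $x_2$ is finite with $x_2<0$, if $x_2=\infty$ then $x_1$ is finite with $x_1>0$ (and the same for $y_1,y_2$). (Such rectangles are exactly the cells of a mesh $\delta_x\times\delta_y$ with $\delta_x=\{-\infty=x_0<\dots<x_p=\infty\}$, $\delta_y=\{-\infty=y_0<\dots<y_q=\infty\}$ each containing a finite strictly positive and a finite strictly negative point.) For an interval $[x_1,x_2]$ of this kind define weights $\lambda_1,\lambda_2$ on $[x_1,x_2]$: if $x_1,x_2$ are both finite, $\lambda_2(x)=\frac{x-x_1}{x_2-x_1}$; if $x_1=-\infty$, $\lambda_2(x)=\frac{x_2}{x}$ (equal to $0$ at $x=-\infty$); in these two cases $\lambda_1=1-\lambda_2$; if $x_2=\infty$, $\lambda_1(x)=\frac{x_1}{x}$ (equal to $0$ at $x=\infty$) and $\lambda_2=1-\lambda_1$. Define $\mu_1,\mu_2$ on $[y_1,y_2]$ in the same way. The bilinear interpolation of $A$ is $A^{\mathrm{BL}}(x,y)=\sum_{k,l\in\{1,2\}}\lambda_k(x)\mu_l(y)A(x_k,y_l)$; it is the unique function on $R$ agreeing with $A$ at the corners whose one-dimensional sections parallel to the axes are linear (between two finite endpoints) or linear rational with pole at $0$ (between a finite and an infinite endpoint). The volume of a rectangle $[u_1,u_2]\times[v_1,v_2]$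 with respect to a function $G$ is $V_G=G(u_1,v_1)+G(u_2,v_2)-G(u_2,v_1)-G(u_1,v_2)$. *)

theory Defs
  imports Complex_Main "HOL-Library.Extended_Real"
begin

definition admissible_interval :: "ereal \<Rightarrow> ereal \<Rightarrow> bool" where
  "admissible_interval a b \<longleftrightarrow> a < b \<and>
     (a = -\<infinity> \<longrightarrow> (b \<noteq> \<infinity> \<and> b \<noteq> -\<infinity> \<and> b < 0)) \<and>
     (b = \<infinity> \<longrightarrow> (a \<noteq> \<infinity> \<and> a \<noteq> -\<infinity> \<and> a > 0))"

definition admissible_rectangle :: "ereal \<Rightarrow> ereal \<Rightarrow> ereal \<Rightarrow> ereal \<Rightarrow> bool" where
  "admissible_rectangle x1 x2 y1 y2 \<longleftrightarrow> admissible_interval x1 x2 \<and> admissible_interval y1 y2"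

definition wt2 :: "ereal \<Rightarrow> ereal \<Rightarrow> ereal \<Rightarrow> real" where
  "wt2 a b x =
     (if a = -\<infinity> then (if x = -\<infinity> then 0 else real_of_ereal b / real_of_ereal x)
      else if b = \<infinity> then 1 - (if x = \<infinity> then 0 else real_of_ereal a / real_of_ereal x)
      else (real_of_ereal x - real_of_ereal a) / (real_of_ereal b - real_of_ereal a))"

definition wt1 :: "ereal \<Rightarrow> ereal \<Rightarrow> ereal \<Rightarrow> real" where
  "wt1 a b x =
     (if a = -\<infinity> then 1 - (if x = -\<infinity> then 0 else real_of_ereal b / real_of_ereal x)
      else if b = \<infinity> then (if x = \<infinity> then 0 else real_of_ereal a / real_of_ereal x)
      else 1 - (real_of_ereal x - real_of_ereal a) / (real_of_ereal b - real_of_ereal a))"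

definition bilin_interp ::
  "ereal \<Rightarrow> ereal \<Rightarrow> ereal \<Rightarrow> ereal \<Rightarrow> (ereal \<Rightarrow> ereal \<Rightarrow> real) \<Rightarrow> ereal \<Rightarrow> ereal \<Rightarrow> real" where
  "bilin_interp x1 x2 y1 y2 A x y =
       wt1 x1 x2 x * wt1 y1 y2 y * A x1 y1 + wt1 x1 x2 x * wt2 y1 y2 y * A x1 y2
     + wt2 x1 x2 x * wt1 y1 y2 y * A x2 y1 + wt2 x1 x2 x * wt2 y1 y2 y * A x2 y2"

definition volume_wrt :: "(ereal \<Rightarrow> ereal \<Rightarrow> real) \<Rightarrow> ereal \<Rightarrow> ereal \<Rightarrow> ereal \<Rightarrow> ereal \<Rightarrow> real" where
  "volume_wrt G u1 u2 v1 v2 = G u1 v1 + G u2 v2 - G u2 v1 - G u1 v2"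

end

theory Submission
  imports Defs
begin

lemma wt1_eq: "wt1 a b x = 1 - wt2 a b x"
  unfolding wt1_def wt2_def by auto

lemma wt2_mono:
  assumes adm: "admissible_interval a b" and h: "a \<le> x" "x < x'" "x' \<le> b"
  shows "wt2 a b x < wt2 a b x'"
proof -
  have ab: "a < b" using adm by (simp add: admissible_interval_def)
  show ?thesis
  proof (cases "a = -\<infinity>")
    case True
    then obtain rb where rb: "b = ereal rb" "rb < 0" using adm
      by (cases b) (auto simp: admissible_interval_def)
    have x'f: "x' \<noteq> -\<infinity>" using h by auto
    then obtain r' where r': "x' = ereal r'" using h rb by (cases x') auto
    have r'neg: "r' < 0" "r' \<le> rb" using h rb r' by auto
    show ?thesis
    proof (cases "x = -\<infinity>")
      case True
      then show ?thesis using \<open>a = -\<infinity>\<close> rb r' r'neg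
        by (simp add: wt2_def divide_neg_neg)
    next
      case False
      then obtain r where r: "x = ereal r" using h r' by (cases x) auto
      have "r < r'" using h r r' by auto
      hence "rb / r < rb / r'" using r'neg rb
        by (simp add: divide_simps)
      then show ?thesis using \<open>a = -\<infinity>\<close> False r r' x'f rb by (simp add: wt2_def)
    qed
  next
    case an: False
    show ?thesis
    proof (cases "b = \<infinity>")
      case True
      then obtain ra where ra: "a = ereal ra" "ra > 0" using adm
        by (cases a) (auto simp: admissible_interval_def)
      have xf: "x \<noteq> \<infinity>" using h by auto
      then obtain r where r: "x = ereal r" using h ra by (cases x) auto
      have rpos: "r > 0" "ra \<le> r" using h ra r by auto
      show ?thesis
      proof (cases "x' = \<infinity>")
        case True
        then show ?thesis using an \<open>b = \<infinity>\<close> ra r rpos by (simp add: wt2_def)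
      next
        case False
        then obtain r' where r': "x' = ereal r'" using h r by (cases x') auto
        have "r < r'" using h r r' by auto
        hence "ra / r' < ra / r" using rpos ra
          by (simp add: divide_simps)
        then show ?thesis using an \<open>b = \<infinity>\<close> False r r' xf ra by (simp add: wt2_def)
      qed
    next
      case bn: False
      obtain ra rb where ab': "a = ereal ra" "b = ereal rb" using an bn ab
        by (cases a; cases b) auto
      obtain r r' where rr: "x = ereal r" "x' = ereal r'" using h ab'
        by (cases x; cases x') auto
      have "ra < rb" "r < r'" using ab ab' rr h by auto
      then show ?thesis using an bn ab' rr
        by (simp add: wt2_def divide_strict_right_mono)
    qed
  qed
qed

lemma wt2_left: "admissible_interval a b \<Longrightarrow> wt2 a b a = 0"
  by (cases a; cases b) (auto simp: wt2_def admissible_interval_def)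
lemma wt2_right: "admissible_interval a b \<Longrightarrow> wt2 a b b = 1"
  by (cases a; cases b) (auto simp: wt2_def admissible_interval_def)

lemma wt2_range:
  assumes "admissible_interval a b" "a \<le> x" "x \<le> b"
  shows "0 \<le> wt2 a b x \<and> wt2 a b x \<le> 1"
proof -
  have "wt2 a b a \<le> wt2 a b x" using wt2_mono[OF assms(1), of a x] assms
    by (cases "a = x") (auto dest: order.not_eq_order_implies_strict)
  moreover have "wt2 a b x \<le> wt2 a b b" using wt2_mono[OF assms(1), of x b] assms
    by (cases "x = b") (auto dest: order.not_eq_order_implies_strict)
  ultimately show ?thesis using wt2_left[OF assms(1)] wt2_right[OF assms(1)] by simp
qed

lemma wt2_le:
  assumes "admissible_interval a b" "a \<le> x" "x \<le> x'" "x' \<le> b"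
  shows "wt2 a b x \<le> wt2 a b x'"
  using wt2_mono[OF assms(1), of x x'] assms
  by (cases "x = x'") (auto dest: order.not_eq_order_implies_strict)


theorem corollary2:
  fixes x1 x2 y1 y2 :: ereal and A :: "ereal \<Rightarrow> ereal \<Rightarrow> real"
  assumes adm: "admissible_rectangle x1 x2 y1 y2"
    and incx: "\<And>y. y \<in> {y1, y2} \<Longrightarrow> A x1 y \<le> A x2 y"
    and incy: "\<And>x. x \<in> {x1, x2} \<Longrightarrow> A x y1 \<le> A x y2"
  shows "(\<forall>x \<in> {x1..x2}. \<forall>x' \<in> {x1..x2}. \<forall>y \<in> {y1..y2}. x \<le> x' \<longrightarrow>
            bilin_interp x1 x2 y1 y2 A x y \<le> bilin_interp x1 x2 y1 y2 A x' y)
       \<and> (\<forall>x \<in> {x1..x2}. \<forall>y \<in> {y1..y2}. \<forall>y' \<in> {y1..y2}. y \<le> y' \<longrightarrow>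
            bilin_interp x1 x2 y1 y2 A x y \<le> bilin_interp x1 x2 y1 y2 A x y')
       \<and> (\<forall>u1 u2 v1 v2. x1 \<le> u1 \<and> u1 < u2 \<and> u2 \<le> x2 \<and> y1 \<le> v1 \<and> v1 < v2 \<and> v2 \<le> y2 \<longrightarrow>
            (volume_wrt (bilin_interp x1 x2 y1 y2 A) u1 u2 v1 v2 > 0 \<longleftrightarrow>
               volume_wrt (bilin_interp x1 x2 y1 y2 A) x1 x2 y1 y2 > 0)
          \<and> (volume_wrt (bilin_interp x1 x2 y1 y2 A) u1 u2 v1 v2 < 0 \<longleftrightarrow>
               volume_wrt (bilin_interp x1 x2 y1 y2 A) x1 x2 y1 y2 < 0)
          \<and> (volume_wrt (bilin_interp x1 x2 y1 y2 A) u1 u2 v1 v2 = 0 \<longleftrightarrow>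
               volume_wrt (bilin_interp x1 x2 y1 y2 A) x1 x2 y1 y2 = 0))"
  proof -
  have ax: "admissible_interval x1 x2" and ay: "admissible_interval y1 y2"
    using adm by (auto simp: admissible_rectangle_def)
  define D where "D = A x1 y1 + A x2 y2 - A x1 y2 - A x2 y1"
  let ?B = "bilin_interp x1 x2 y1 y2 A"
  have B: "?B x y = A x1 y1 + wt2 x1 x2 x * (A x2 y1 - A x1 y1)
      + wt2 y1 y2 y * (A x1 y2 - A x1 y1) + wt2 x1 x2 x * wt2 y1 y2 y * D" for x y
    unfolding bilin_interp_def wt1_eq D_def by (simp add: algebra_simps)
  have V: "volume_wrt ?B u1 u2 v1 v2 =
      (wt2 x1 x2 u2 - wt2 x1 x2 u1) * (wt2 y1 y2 v2 - wt2 y1 y2 v1) * D" for u1 u2 v1 v2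
    unfolding volume_wrt_def B by (simp add: algebra_simps)
  have VR: "volume_wrt ?B x1 x2 y1 y2 = D"
    unfolding V wt2_left[OF ax] wt2_right[OF ax] wt2_left[OF ay] wt2_right[OF ay] by simp
  have a1: "A x1 y1 \<le> A x2 y1" "A x1 y2 \<le> A x2 y2" using incx by auto
  have a2: "A x1 y1 \<le> A x1 y2" "A x2 y1 \<le> A x2 y2" using incy by auto
  have P1: "?B x y \<le> ?B x' y" if "x \<in> {x1..x2}" "x' \<in> {x1..x2}" "y \<in> {y1..y2}" "x \<le> x'"
    for x x' y
  proof -
    have l: "wt2 x1 x2 x \<le> wt2 x1 x2 x'" using wt2_le[OF ax] that by auto
    have m: "0 \<le> wt2 y1 y2 y" "wt2 y1 y2 y \<le> 1" using wt2_range[OF ay] that by auto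
    have "?B x' y - ?B x y = (wt2 x1 x2 x' - wt2 x1 x2 x) *
       ((1 - wt2 y1 y2 y) * (A x2 y1 - A x1 y1) + wt2 y1 y2 y * (A x2 y2 - A x1 y2))"
      unfolding B D_def by (simp add: algebra_simps)
    moreover have "0 \<le> (1 - wt2 y1 y2 y) * (A x2 y1 - A x1 y1) + wt2 y1 y2 y * (A x2 y2 - A x1 y2)"
      using m a1 by (intro add_nonneg_nonneg mult_nonneg_nonneg) auto
    ultimately show ?thesis using l by (smt (verit) mult_nonneg_nonneg)
  qed
  have P2: "?B x y \<le> ?B x y'" if "x \<in> {x1..x2}" "y \<in> {y1..y2}" "y' \<in> {y1..y2}" "y \<le> y'"
    for x y y'
  proof -
    have l: "wt2 y1 y2 y \<le> wt2 y1 y2 y'" using wt2_le[OF ay] that by auto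
    have m: "0 \<le> wt2 x1 x2 x" "wt2 x1 x2 x \<le> 1" using wt2_range[OF ax] that by auto
    have "?B x y' - ?B x y = (wt2 y1 y2 y' - wt2 y1 y2 y) *
       ((1 - wt2 x1 x2 x) * (A x1 y2 - A x1 y1) + wt2 x1 x2 x * (A x2 y2 - A x2 y1))"
      unfolding B D_def by (simp add: algebra_simps)
    moreover have "0 \<le> (1 - wt2 x1 x2 x) * (A x1 y2 - A x1 y1) + wt2 x1 x2 x * (A x2 y2 - A x2 y1)"
      using m a2 by (intro add_nonneg_nonneg mult_nonneg_nonneg) auto
    ultimately show ?thesis using l by (smt (verit) mult_nonneg_nonneg)
  qed
  have P3: "(volume_wrt ?B u1 u2 v1 v2 > 0 \<longleftrightarrow> volume_wrt ?B x1 x2 y1 y2 > 0)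
          \<and> (volume_wrt ?B u1 u2 v1 v2 < 0 \<longleftrightarrow> volume_wrt ?B x1 x2 y1 y2 < 0)
          \<and> (volume_wrt ?B u1 u2 v1 v2 = 0 \<longleftrightarrow> volume_wrt ?B x1 x2 y1 y2 = 0)"
    if "x1 \<le> u1 \<and> u1 < u2 \<and> u2 \<le> x2 \<and> y1 \<le> v1 \<and> v1 < v2 \<and> v2 \<le> y2" for u1 u2 v1 v2
  proof -
    have "wt2 x1 x2 u1 < wt2 x1 x2 u2" using wt2_mono[OF ax] that by auto
    moreover have "wt2 y1 y2 v1 < wt2 y1 y2 v2" using wt2_mono[OF ay] that by auto
    ultimately have c: "(wt2 x1 x2 u2 - wt2 x1 x2 u1) * (wt2 y1 y2 v2 - wt2 y1 y2 v1) > 0" by simp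
    show ?thesis unfolding VR unfolding V using c
      by (auto simp: zero_less_mult_iff mult_less_0_iff)
  qed
  show ?thesis using P1 P2 P3 by blast
qed

end
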